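(* Let $n\ge 1$ and $N>n$ be integers, let $\lambda>0$, $\beta\in(0,1)$, and let $\tilde b_0\neq 0$ be a real number. Let $\hat\Sigma\in\mathbb{R}^{(n+1)\times(n+1)}$ be a symmetric positive definite Toeplitz matrix, $[\hat\Sigma]_{ts}=\hat r_{|t-s|}$ for $t,s=1,\dots,n+1$. Let $K_{DI}=\mathrm{diag}(\beta,\beta^2,\dots,\beta^{n+1})$ and $v=[1,0,\dots,0]^T\in\mathbb{R}^{n+1}$, and define $$\hat{\mathbf b}_{ML}=[\hat b_0,\hat b_1,\dots,\hat b_n]^T=\tilde b_0^{-1}\left(\hat\Sigma+((N-n)\lambda K_{DI})^{-1}\right)^{-1}v .$$ If the polynomial $\hat b_{ML}(z)=\sum_{k=0}^n \hat b_k z^{-k}$ is not identically zero, then all its zeros lie strictly inside the unit circle, i.e. every (complex) root $\breve z$ of $\hat b_0 z^n+\hat b_1 z^{n-1}+\dots+\hat b_n$ satisfies $|\breve z|<1$.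
   Context: This is the regularized (kernel-based) maximum entropy estimate of the coefficients of a high-order AR model $b(z)y_t=e_t$ with a Gaussian prior $\mathbf b\sim\mathcal N(0,\lambda K_{DI})$ ("diagonal kernel"). In the paper, $\hat r_k=\frac1N\sum_{t=1}^{N-k}y_ty_{t+k}$ are sample covariance lags of data $y_1,\dots,y_N$ and $\tilde b_0$ is a preliminary estimate of $b_0$; for the claim only the stated properties of $\hat\Sigma$ and $\tilde b_0$ are needed. *)

theory Defs
  imports "Jordan_Normal_Form.Matrix"
begin

text \<open>Inverse of a square matrix (meaningful for invertible square matrices).\<close>
definition mat_inv :: "real mat \<Rightarrow> real mat" where
  "mat_inv A = (THE B. B \<in> carrier_mat (dim_row A) (dim_row A) \<and>
       A * B = 1\<^sub>m (dim_row A) \<and> B * A = 1\<^sub>m (dim_row A))"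

definition toeplitz_mat :: "nat \<Rightarrow> (nat \<Rightarrow> real) \<Rightarrow> real mat" where
  "toeplitz_mat m r = mat m m (\<lambda>(t, s). r (if s \<le> t then t - s else s - t))"

definition pos_def_mat :: "real mat \<Rightarrow> bool" where
  "pos_def_mat A \<longleftrightarrow> A \<in> carrier_mat (dim_row A) (dim_row A) \<and> A\<^sup>T = A \<and>
     (\<forall>x \<in> carrier_vec (dim_row A). x \<noteq> 0\<^sub>v (dim_row A) \<longrightarrow> x \<bullet> (A *\<^sub>v x) > 0)"

definition K_DI :: "nat \<Rightarrow> real \<Rightarrow> real mat" where
  "K_DI n \<beta> = mat (n+1) (n+1) (\<lambda>(i, j). if i = j then \<beta> ^ (i+1) else 0)"

definition b_ML :: "nat \<Rightarrow> nat \<Rightarrow> real \<Rightarrow> real \<Rightarrow> real \<Rightarrow> real mat \<Rightarrow> real vec" where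
  "b_ML n N lam \<beta> bt Sig =
     (1 / bt) \<cdot>\<^sub>v (mat_inv (Sig + mat_inv ((real (N - n) * lam) \<cdot>\<^sub>m K_DI n \<beta>)) *\<^sub>v unit_vec (n+1) 0)"

end

theory Submission
  imports Defs "Jordan_Normal_Form.Determinant"
begin

definition dst :: "nat \<Rightarrow> nat \<Rightarrow> nat" where
  "dst i j = (if j \<le> i then i - j else j - i)"

lemma dst_sym: "dst i j = dst j i" by (simp add: dst_def)
lemma dst_Suc: "dst (Suc i) (Suc j) = dst i j" by (simp add: dst_def)

lemma sum_diag:
  fixes f g h :: "nat \<Rightarrow> 'a::comm_semiring_1"
  assumes "i \<in> S" "finite S"
  shows "(\<Sum>j\<in>S. f j * (g j + (if i = j then e else 0)) * h j) = (\<Sum>j\<in>S. f j * g j * h j) + f i * e * h i"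
proof -
  have "(\<Sum>j\<in>S. f j * (g j + (if i = j then e else 0)) * h j) = (\<Sum>j\<in>S. f j * g j * h j + (if i = j then f j * e * h j else 0))"
    by (rule sum.cong) (auto simp: algebra_simps)
  also have "\<dots> = (\<Sum>j\<in>S. f j * g j * h j) + f i * e * h i"
    using assms by (simp add: sum.distrib)
  finally show ?thesis .
qed

lemma core:
  fixes r d b :: "nat \<Rightarrow> real" and c :: real and z :: complex and m :: nat
  defines "A \<equiv> \<lambda>i j. r (dst i j) + (if i = j then d i else 0)"
  assumes pdT: "\<And>x. (\<exists>i\<le>Suc m. x i \<noteq> 0) \<Longrightarrow> (\<Sum>i\<le>Suc m. \<Sum>j\<le>Suc m. x i * r (dst i j) * x j) > 0"
    and dpos: "\<And>i. d i \<ge> 0"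
    and dmono: "\<And>i. i \<le> m \<Longrightarrow> d i \<le> d (Suc i)"
    and eq: "\<And>i. i \<le> Suc m \<Longrightarrow> (\<Sum>j\<le>Suc m. A i j * b j) = (if i = 0 then c else 0)"
    and bnz: "\<exists>i\<le>Suc m. b i \<noteq> 0"
    and root: "(\<Sum>k\<le>Suc m. complex_of_real (b k) * z ^ (Suc m - k)) = 0"
  shows "cmod z < 1"
proof -
  define n where "n = Suc m"
  define Q where "Q = (\<lambda>x::nat\<Rightarrow>real. \<Sum>i\<le>n. \<Sum>j\<le>n. x i * A i j * x j)"
  define H where "H = (\<lambda>x::nat\<Rightarrow>complex. \<Sum>i\<le>n. \<Sum>j\<le>n. cnj (x i) * of_real (A i j) * x j)"
  define HT where "HT = (\<lambda>x::nat\<Rightarrow>complex. \<Sum>i\<le>n. \<Sum>j\<le>n. cnj (x i) * of_real (r (dst i j)) * x j)"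
  have Qsplit: "Q x = (\<Sum>i\<le>n. \<Sum>j\<le>n. x i * r (dst i j) * x j) + (\<Sum>i\<le>n. x i * d i * x i)" for x
  proof -
    have "Q x = (\<Sum>i\<le>n. (\<Sum>j\<le>n. x i * r (dst i j) * x j) + x i * d i * x i)"
      unfolding Q_def A_def
    proof (rule sum.cong)
      fix i assume "i \<in> {..n}"
      from sum_diag[OF this finite_atMost, of "\<lambda>_. x i" "\<lambda>j. r (dst i j)" "d i" x]
      show "(\<Sum>j\<le>n. x i * (r (dst i j) + (if i = j then d i else 0)) * x j) = (\<Sum>j\<le>n. x i * r (dst i j) * x j) + x i * d i * x i" by simp
    qed simp
    then show ?thesis by (simp add: sum.distrib)
  qed
  have Qnn: "Q x \<ge> 0" for x
  proof (cases "\<exists>i\<le>n. x i \<noteq> 0")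
    case True
    have "(\<Sum>i\<le>n. x i * d i * x i) \<ge> 0"
      by (rule sum_nonneg) (metis dpos mult.assoc mult.commute mult_nonneg_nonneg zero_le_square)
    with pdT[of x] True show ?thesis unfolding Qsplit n_def by simp
  next
    case False
    then show ?thesis unfolding Q_def by simp
  qed
  have Qb: "Q b > 0"
  proof -
    have "(\<Sum>i\<le>n. b i * d i * b i) \<ge> 0"
      by (rule sum_nonneg) (metis dpos mult.assoc mult.commute mult_nonneg_nonneg zero_le_square)
    with pdT[OF bnz] show ?thesis unfolding Qsplit n_def by simp
  qed
  have ReH: "Re (H x) = Q (\<lambda>i. Re (x i)) + Q (\<lambda>i. Im (x i))" for x
    unfolding H_def Q_def Re_sum sum.distrib[symmetric]
    by (intro sum.cong refl) (simp add: algebra_simps)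
  have Hsplit: "H x = HT x + (\<Sum>i\<le>n. cnj (x i) * of_real (d i) * x i)" for x
  proof -
    have "H x = (\<Sum>i\<le>n. (\<Sum>j\<le>n. cnj (x i) * of_real (r (dst i j)) * x j) + cnj (x i) * of_real (d i) * x i)"
      unfolding H_def A_def of_real_add
    proof (rule sum.cong)
      fix i assume "i \<in> {..n}"
      from sum_diag[OF this finite_atMost, of "\<lambda>_. cnj (x i)" "\<lambda>j. of_real (r (dst i j))" "of_real (d i)" x]
      show "(\<Sum>j\<le>n. cnj (x i) * (complex_of_real (r (dst i j)) + complex_of_real (if i = j then d i else 0)) * x j) = (\<Sum>j\<le>n. cnj (x i) * of_real (r (dst i j)) * x j) + cnj (x i) * of_real (d i) * x i"
        by (simp add: of_real_def if_distrib cong: if_cong)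
    qed simp
    then show ?thesis unfolding HT_def by (simp add: sum.distrib)
  qed
  have Asym: "A i j = A j i" for i j unfolding A_def by (auto simp: dst_sym)
  define bc where "bc = (\<lambda>i. complex_of_real (b i))"
  define q where "q = (\<lambda>k. \<Sum>j\<le>k. bc j * z ^ (k - j))"
  have q_Suc: "q (Suc k) = bc (Suc k) + z * q k" for k
  proof -
    have "z * q k = (\<Sum>j\<le>k. bc j * z ^ (Suc k - j))"
      unfolding q_def sum_distrib_left
      by (rule sum.cong) (auto simp: Suc_diff_le algebra_simps)
    then show ?thesis unfolding q_def by simp
  qed
  have q0: "q 0 = bc 0" unfolding q_def by simp
  have qn: "q (Suc m) = 0" using root unfolding q_def bc_def by simp
  define w where "w = (\<lambda>i. if i = 0 then 0 else q (i - 1))"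
  define u where "u = (\<lambda>i. if i = Suc m then 0 else q i)"
  have u_eq: "u i = bc i + z * w i" if "i \<le> n" for i
  proof (cases i)
    case 0 then show ?thesis by (simp add: u_def w_def q0)
  next
    case (Suc k)
    then show ?thesis using q_Suc[of k] qn by (auto simp: u_def w_def)
  qed
  define A' where "A' = (\<lambda>i j. complex_of_real (A i j))"
  have e1: "H u = (\<Sum>i\<le>n. \<Sum>j\<le>n. cnj (bc i) * A' i j * bc j) + z * (\<Sum>i\<le>n. \<Sum>j\<le>n. cnj (bc i) * A' i j * w j)
     + cnj z * (\<Sum>i\<le>n. \<Sum>j\<le>n. cnj (w i) * A' i j * bc j) + (cnj z * z) * H w"
    unfolding H_def A'_def[symmetric] sum_distrib_left sum.distrib[symmetric]
    by (intro sum.cong refl) (simp add: u_eq A'_def algebra_simps)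
  have eqc: "(\<Sum>j\<le>n. A' i j * bc j) = (if i = 0 then of_real c else 0)" if "i \<le> n" for i
  proof -
    have "(\<Sum>j\<le>n. A' i j * bc j) = of_real (\<Sum>j\<le>n. A i j * b j)"
      unfolding A'_def bc_def by simp
    also have "\<dots> = (if i = 0 then of_real c else 0)" using eq[of i] that unfolding n_def by simp
    finally show ?thesis .
  qed
  have w0: "w 0 = 0" unfolding w_def by simp
  have c1: "(\<Sum>i\<le>n. \<Sum>j\<le>n. cnj (bc i) * A' i j * w j) = 0"
  proof -
    have "(\<Sum>i\<le>n. \<Sum>j\<le>n. cnj (bc i) * A' i j * w j) = (\<Sum>j\<le>n. w j * (\<Sum>i\<le>n. A' j i * bc i))"
      unfolding sum_distrib_left
      by (subst sum.swap) (intro sum.cong refl, simp add: A'_def bc_def Asym algebra_simps)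
    also have "\<dots> = (\<Sum>j\<le>n. w j * (if j = 0 then of_real c else 0))"
      by (intro sum.cong refl) (simp add: eqc)
    also have "\<dots> = 0" by (simp add: w0 if_distrib cong: if_cong)
    finally show ?thesis .
  qed
  have c2: "(\<Sum>i\<le>n. \<Sum>j\<le>n. cnj (w i) * A' i j * bc j) = 0"
  proof -
    have "(\<Sum>i\<le>n. \<Sum>j\<le>n. cnj (w i) * A' i j * bc j) = (\<Sum>i\<le>n. cnj (w i) * (\<Sum>j\<le>n. A' i j * bc j))"
      unfolding sum_distrib_left by (simp add: algebra_simps)
    also have "\<dots> = (\<Sum>i\<le>n. cnj (w i) * (if i = 0 then of_real c else 0))"
      by (intro sum.cong refl) (simp add: eqc)
    also have "\<dots> = 0" by (simp add: w0 if_distrib cong: if_cong)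
    finally show ?thesis .
  qed
  have c0: "(\<Sum>i\<le>n. \<Sum>j\<le>n. cnj (bc i) * A' i j * bc j) = of_real (Q b)"
    unfolding Q_def A'_def bc_def by simp
  have Hu: "Re (H u) = Q b + (cmod z)^2 * Re (H w)"
  proof -
    have "H u = of_real (Q b) + of_real ((cmod z)^2) * H w"
      proof -
      have nz: "cnj z * z = complex_of_real ((cmod z)^2)"
        by (metis complex_norm_square mult.commute of_real_power)
      show ?thesis using e1 c0 c1 c2 by (simp add: nz)
    qed
    then show ?thesis by simp
  qed
  have HTw: "HT w = (\<Sum>i\<le>m. \<Sum>j\<le>m. cnj (q i) * of_real (r (dst i j)) * q j)"
    unfolding HT_def n_def sum.atMost_Suc_shift by (simp add: w_def dst_Suc)
  have HTu: "HT u = (\<Sum>i\<le>m. \<Sum>j\<le>m. cnj (q i) * of_real (r (dst i j)) * q j)"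
    unfolding HT_def n_def by (simp add: u_def)
  have Dw: "(\<Sum>i\<le>n. cnj (w i) * of_real (d i) * w i) = (\<Sum>i\<le>m. cnj (q i) * of_real (d (Suc i)) * q i)"
    unfolding n_def sum.atMost_Suc_shift by (simp add: w_def)
  have Du: "(\<Sum>i\<le>n. cnj (u i) * of_real (d i) * u i) = (\<Sum>i\<le>m. cnj (q i) * of_real (d i) * q i)"
    unfolding n_def by (simp add: u_def)
  have ReD: "Re (cnj a * of_real e * a) = e * ((Re a)^2 + (Im a)^2)" for a e
    by (simp add: algebra_simps power2_eq_square)
  have "Re (H u) \<le> Re (H w)"
  proof -
    have key: "a * d i * a \<le> a * d (Suc i) * a" if "i \<le> m" for a i
    proof -
      have "d i * (a * a) \<le> d (Suc i) * (a * a)" by (intro mult_right_mono dmono that) simp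
      then show ?thesis by (simp add: algebra_simps)
    qed
    have "(\<Sum>x\<le>m. Re (q x) * d x * Re (q x) + Im (q x) * d x * Im (q x)) \<le> (\<Sum>x\<le>m. Re (q x) * d (Suc x) * Re (q x) + Im (q x) * d (Suc x) * Im (q x))"
      by (intro sum_mono add_mono key) auto
    then show ?thesis unfolding Hsplit HTw HTu Dw Du by (simp add: ReD)
  qed
  moreover have "Re (H w) \<ge> 0" unfolding ReH using Qnn by (simp add: add_nonneg_nonneg)
  ultimately show ?thesis using Hu Qb
  proof -
    assume a: "Re (H u) \<le> Re (H w)" "Re (H w) \<ge> 0"
    show ?thesis
    proof (rule ccontr)
      assume "\<not> cmod z < 1"
      then have "1 \<le> (cmod z)^2" by (simp add: one_le_power)
      then have "Re (H w) \<le> (cmod z)^2 * Re (H w)" using a(2) mult_right_mono[of 1 "(cmod z)^2" "Re (H w)"] by simp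
      then show False using a Hu Qb by linarith
    qed
  qed
qed
lemma inv_exists:
  fixes A :: "real mat"
  assumes A: "A \<in> carrier_mat m m" and inj: "\<And>v. v \<in> carrier_vec m \<Longrightarrow> A *\<^sub>v v = 0\<^sub>v m \<Longrightarrow> v = 0\<^sub>v m"
  shows "\<exists>B. B \<in> carrier_mat m m \<and> A * B = 1\<^sub>m m \<and> B * A = 1\<^sub>m m"
proof -
  have "det A \<noteq> 0" using det_0_iff_vec_prod_zero_field[OF A] inj by blast
  from det_non_zero_imp_unit[OF A this, of "()"]
  show ?thesis unfolding Units_def by (auto simp: ring_mat_def)
qed

lemma mat_inv_unique:
  assumes A: "A \<in> carrier_mat m m" and B: "B \<in> carrier_mat m m"
    and AB: "A * B = 1\<^sub>m m" and BA: "B * A = 1\<^sub>m m"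
  shows "mat_inv A = B"
proof -
  have dr: "dim_row A = m" using A by simp
  show ?thesis unfolding mat_inv_def dr
  proof (rule the_equality)
    show "B \<in> carrier_mat m m \<and> A * B = 1\<^sub>m m \<and> B * A = 1\<^sub>m m" using B AB BA by simp
  next
    fix B' assume h: "B' \<in> carrier_mat m m \<and> A * B' = 1\<^sub>m m \<and> B' * A = 1\<^sub>m m"
    have "B' = B' * (A * B)" using AB h right_mult_one_mat[of B' m m] by simp
    also have "\<dots> = (B' * A) * B" using A B h by (intro assoc_mult_mat[symmetric]) auto
    also have "\<dots> = B" using h B by simp
    finally show "B' = B" .
  qed
qed

lemma quad_form:
  fixes A :: "real mat"
  assumes A: "A \<in> carrier_mat m m" and v: "v \<in> carrier_vec m"
  shows "v \<bullet> (A *\<^sub>v v) = (\<Sum>i<m. \<Sum>j<m. v $ i * A $$ (i, j) * v $ j)"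
  using A v unfolding scalar_prod_def
  by (auto simp: atLeast0LessThan sum_distrib_left scalar_prod_def row_def algebra_simps intro!: sum.cong)

theorem proposition1:
  fixes n N :: nat and lam \<beta> bt :: real and r :: "nat \<Rightarrow> real"
  assumes "n \<ge> 1" and "N > n"
    and "lam > 0" and "0 < \<beta>" and "\<beta> < 1" and "bt \<noteq> 0"
    and "pos_def_mat (toeplitz_mat (n+1) r)"
  defines "b \<equiv> b_ML n N lam \<beta> bt (toeplitz_mat (n+1) r)"
  assumes "b \<noteq> 0\<^sub>v (n+1)"
  shows "\<forall>z::complex. (\<Sum>k\<le>n. complex_of_real (b $ k) * z ^ (n - k)) = 0 \<longrightarrow> cmod z < 1"
proof (intro allI impI)
  fix z :: complex
  assume root: "(\<Sum>k\<le>n. complex_of_real (b $ k) * z ^ (n - k)) = 0"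
  obtain m where nm: "n = Suc m" using assms(1) by (cases n) auto
  define S where "S = toeplitz_mat (n+1) r"
  define cst where "cst = real (N - n) * lam"
  have cpos: "cst > 0" unfolding cst_def using assms(2,3) by simp
  define dd where "dd = (\<lambda>i::nat. 1 / (cst * \<beta> ^ (i+1)))"
  define K' where "K' = cst \<cdot>\<^sub>m K_DI n \<beta>"
  define Dm where "Dm = mat (n+1) (n+1) (\<lambda>(i, j). if i = j then dd i else 0)"
  have K'c: "K' \<in> carrier_mat (n+1) (n+1)" unfolding K'_def K_DI_def by simp
  have Dmc: "Dm \<in> carrier_mat (n+1) (n+1)" unfolding Dm_def by simp
  have bpow: "\<beta> ^ k > 0" for k using assms(4) by simp
  have K'Dm: "K' * Dm = 1\<^sub>m (n+1)"
  proof (rule eq_matI)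
    fix i j assume ij: "i < dim_row (1\<^sub>m (n+1))" "j < dim_col (1\<^sub>m (n+1))"
    have "(K' * Dm) $$ (i, j) = (\<Sum>k\<in>{0..<n+1}. (if i = k then cst * \<beta> ^ (i+1) else 0) * (if k = j then dd k else 0))"
      using ij unfolding K'_def Dm_def K_DI_def by (auto simp: scalar_prod_def intro!: sum.cong)
    also have "\<dots> = (\<Sum>k\<in>{0..<n+1}. if k = i then (if i = j then cst * \<beta> ^ (i+1) * dd i else 0) else 0)"
      by (intro sum.cong) auto
    also have "\<dots> = (if i = j then cst * \<beta> ^ (i+1) * dd i else 0)" using ij by simp
    also have "\<dots> = (if i = j then 1 else 0)"
      using cpos bpow[of "i+1"] assms(4) by (simp add: dd_def)
    finally show "(K' * Dm) $$ (i, j) = 1\<^sub>m (n+1) $$ (i, j)" using ij by simp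
  qed (use K'c Dmc in auto)
  have DmK': "Dm * K' = 1\<^sub>m (n+1)"
  proof (rule eq_matI)
    fix i j assume ij: "i < dim_row (1\<^sub>m (n+1))" "j < dim_col (1\<^sub>m (n+1))"
    have "(Dm * K') $$ (i, j) = (\<Sum>k\<in>{0..<n+1}. (if i = k then dd i else 0) * (if k = j then cst * \<beta> ^ (k+1) else 0))"
      using ij unfolding K'_def Dm_def K_DI_def by (auto simp: scalar_prod_def intro!: sum.cong)
    also have "\<dots> = (\<Sum>k\<in>{0..<n+1}. if k = i then (if i = j then dd i * (cst * \<beta> ^ (i+1)) else 0) else 0)"
      by (intro sum.cong) auto
    also have "\<dots> = (if i = j then dd i * (cst * \<beta> ^ (i+1)) else 0)" using ij by simp
    also have "\<dots> = (if i = j then 1 else 0)"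
      using cpos bpow[of "i+1"] assms(4) by (simp add: dd_def)
    finally show "(Dm * K') $$ (i, j) = 1\<^sub>m (n+1) $$ (i, j)" using ij by simp
  qed (use K'c Dmc in auto)
  have invK: "mat_inv K' = Dm" by (rule mat_inv_unique[OF K'c Dmc K'Dm DmK'])
  define M where "M = S + Dm"
  have Sc: "S \<in> carrier_mat (n+1) (n+1)" unfolding S_def toeplitz_mat_def by simp
  have Mc: "M \<in> carrier_mat (n+1) (n+1)" unfolding M_def using Sc Dmc by simp
  have Sent: "S $$ (i, j) = r (dst i j)" if "i < n+1" "j < n+1" for i j
    using that unfolding S_def toeplitz_mat_def dst_def by simp
  have Ment: "M $$ (i, j) = r (dst i j) + (if i = j then dd i else 0)" if "i < n+1" "j < n+1" for i j
    using that Sent unfolding M_def Dm_def by simp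
  have Spd: "v \<bullet> (S *\<^sub>v v) > 0" if "v \<in> carrier_vec (n+1)" "v \<noteq> 0\<^sub>v (n+1)" for v
    using assms(7) that unfolding pos_def_mat_def S_def[symmetric] using Sc by auto
  have Mquad: "v \<bullet> (M *\<^sub>v v) = v \<bullet> (S *\<^sub>v v) + (\<Sum>i<n+1. v $ i * dd i * v $ i)"
    if v: "v \<in> carrier_vec (n+1)" for v
  proof -
    have "v \<bullet> (M *\<^sub>v v) = (\<Sum>i<n+1. \<Sum>j<n+1. v $ i * (r (dst i j) + (if i = j then dd i else 0)) * v $ j)"
      unfolding quad_form[OF Mc v] by (intro sum.cong refl) (simp add: Ment)
    also have "\<dots> = (\<Sum>i<n+1. (\<Sum>j<n+1. v $ i * r (dst i j) * v $ j) + v $ i * dd i * v $ i)"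
    proof (rule sum.cong)
      fix i assume "i \<in> {..<n+1}"
      from sum_diag[OF this finite_lessThan, of "\<lambda>_. v $ i" "\<lambda>j. r (dst i j)" "dd i" "\<lambda>j. v $ j"]
      show "(\<Sum>j<n+1. v $ i * (r (dst i j) + (if i = j then dd i else 0)) * v $ j) = (\<Sum>j<n+1. v $ i * r (dst i j) * v $ j) + v $ i * dd i * v $ i" by simp
    qed simp
    also have "\<dots> = v \<bullet> (S *\<^sub>v v) + (\<Sum>i<n+1. v $ i * dd i * v $ i)"
      unfolding quad_form[OF Sc v] sum.distrib by (simp add: Sent)
    finally show ?thesis .
  qed
  have ddpos: "dd i \<ge> 0" for i unfolding dd_def using cpos bpow[of "i+1"] by simp
  have Dnn: "(\<Sum>i<n+1. v $ i * dd i * v $ i) \<ge> 0" for v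
    by (rule sum_nonneg) (metis ddpos mult.assoc mult.commute mult_nonneg_nonneg zero_le_square)
  have Minj: "v = 0\<^sub>v (n+1)" if v: "v \<in> carrier_vec (n+1)" and Mv: "M *\<^sub>v v = 0\<^sub>v (n+1)" for v
  proof (rule ccontr)
    assume "v \<noteq> 0\<^sub>v (n+1)"
    then have "v \<bullet> (M *\<^sub>v v) > 0" using Mquad[OF v] Spd[OF v] Dnn[of v] by linarith
    moreover have "v \<bullet> (M *\<^sub>v v) = 0" using Mv v by simp
    ultimately show False by simp
  qed
  obtain Bi where Bic: "Bi \<in> carrier_mat (n+1) (n+1)" and MBi: "M * Bi = 1\<^sub>m (n+1)" and BiM: "Bi * M = 1\<^sub>m (n+1)"
    using inv_exists[OF Mc Minj] by blast
  have invM: "mat_inv M = Bi" by (rule mat_inv_unique[OF Mc Bic MBi BiM])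
  have bdef: "b = (1 / bt) \<cdot>\<^sub>v (Bi *\<^sub>v unit_vec (n+1) 0)"
    unfolding b_def b_ML_def K'_def[symmetric] cst_def[symmetric] invK S_def[symmetric] M_def[symmetric] invM ..
  have bc: "b \<in> carrier_vec (n+1)" unfolding bdef using Bic by simp
  have Mb: "M *\<^sub>v b = (1 / bt) \<cdot>\<^sub>v unit_vec (n+1) 0"
  proof -
    have "M *\<^sub>v b = (1 / bt) \<cdot>\<^sub>v (M *\<^sub>v (Bi *\<^sub>v unit_vec (n+1) 0))"
      unfolding bdef using Mc Bic by (simp add: mult_mat_vec)
    also have "M *\<^sub>v (Bi *\<^sub>v unit_vec (n+1) 0) = (M * Bi) *\<^sub>v unit_vec (n+1) 0"
      using Mc Bic by (simp add: assoc_mult_mat_vec)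
    also have "\<dots> = unit_vec (n+1) 0" unfolding MBi by simp
    finally show ?thesis .
  qed
  have idx: "{..<n+1} = {..n}" by auto
  show "cmod z < 1"
  proof (rule core[of m r dd "\<lambda>i. b $ i" "1 / bt" z])
    fix x :: "nat \<Rightarrow> real"
    assume ex: "\<exists>i\<le>Suc m. x i \<noteq> 0"
    define v where "v = vec (n+1) x"
    have vc: "v \<in> carrier_vec (n+1)" unfolding v_def by simp
    have vnz: "v \<noteq> 0\<^sub>v (n+1)"
    proof
      assume "v = 0\<^sub>v (n+1)"
      then have "\<And>i. i < n+1 \<Longrightarrow> x i = 0" unfolding v_def by (metis index_vec index_zero_vec(1))
      with ex nm show False by auto
    qed
    have "v \<bullet> (S *\<^sub>v v) = (\<Sum>i\<le>Suc m. \<Sum>j\<le>Suc m. x i * r (dst i j) * x j)"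
      unfolding quad_form[OF Sc vc] idx nm[symmetric] by (intro sum.cong refl) (simp add: v_def Sent)
    then show "(\<Sum>i\<le>Suc m. \<Sum>j\<le>Suc m. x i * r (dst i j) * x j) > 0" using Spd[OF vc vnz] by simp
  next
    show "\<And>i. dd i \<ge> 0" by (rule ddpos)
  next
    fix i assume "i \<le> m"
    have "\<beta> ^ (Suc i + 1) \<le> \<beta> ^ (i + 1)"
      using assms(4,5) by (intro power_decreasing) auto
    then show "dd i \<le> dd (Suc i)" unfolding dd_def using cpos bpow assms(4)
      by (intro divide_left_mono mult_left_mono mult_pos_pos) auto
  next
    fix i assume i: "i \<le> Suc m"
    have "(M *\<^sub>v b) $ i = (\<Sum>j<n+1. M $$ (i, j) * b $ j)"
      using i nm Mc bc by (simp add: scalar_prod_def row_def atLeast0LessThan mult.commute)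
    also have "\<dots> = (\<Sum>j\<le>Suc m. (r (dst i j) + (if i = j then dd i else 0)) * b $ j)"
      unfolding idx nm[symmetric] using i nm by (intro sum.cong refl) (simp add: Ment)
    finally have h: "(M *\<^sub>v b) $ i = (\<Sum>j\<le>Suc m. (r (dst i j) + (if i = j then dd i else 0)) * b $ j)" .
    have e: "(M *\<^sub>v b) $ i = (if i = 0 then 1 / bt else 0)" using Mb i nm by simp
    show "(\<Sum>j\<le>Suc m. (r (dst i j) + (if i = j then dd i else 0)) * b $ j) = (if i = 0 then 1 / bt else 0)"
      using h e by metis
  next
    show "\<exists>i\<le>Suc m. b $ i \<noteq> 0"
    proof (rule ccontr)
      assume "\<not> ?thesis"
      then have "b = 0\<^sub>v (n+1)" using bc nm by (intro eq_vecI) auto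
      with assms(9) show False by simp
    qed
  next
    show "(\<Sum>k\<le>Suc m. complex_of_real (b $ k) * z ^ (Suc m - k)) = 0" using root nm by simp
  qed
qed

end
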